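(* Let $f\ge 1$ and $k\ge 3$ be integers and let there be $n=kf+1$ validators, each maintaining a local DAG as described in the context (Tusk setting). Let $p_i$ be a validator and $w$ a wave such that $DAG_i[\mathit{round}(w,2)]$ contains at least $(k-1)f+1$ vertices. Then there are at least $(k-2)f+1$ vertices $v\in DAG_i[\mathit{round}(w,1)]$ that satisfy the commit rule, i.e. for each of them at least $f+1$ vertices of $DAG_i[\mathit{round}(w,2)]$ have an edge to $v$.
   Context: Setting: $n=kf+1$ validators $p_1,\dots,p_n$, at most $f$ Byzantine. All local DAGs are subsets of one common set of vertices. Each vertex has a round number $r\ge1$ and a source validator; for each validator and round there is at most one vertex (no equivocation). Hence each round has at most $kf+1$ vertices. Every vertex of round $r\ge2$ has edges to $(k-1)f+1$ vertices of round $r-1$ with distinct sources. Each validator $p_i$ has a local DAG $DAG_i$, closed under edges; $DAG_i[r]$ is its set of round-$r$ vertices. Waves consist of 3 rounds, pipelined so that round 3 of wave $w$ is round 1 of wave $w+1$: $\mathit{round}(w,j)=2(w-1)+j$, $j=1,2,3$. Commit rule: a vertex $v$ of $\mathit{round}(w,1)$ satisfies the commit rule in $DAG_i$ if at least $f+1$ vertices of $DAG_i[\mathit{round}(w,2)]$ have an edge to $v$. *)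

theory Defs
  imports Main
begin

text \<open>Tusk setting. Vertices have type 'v; rnd v is the round number, src v the
source validator (validators are indexed 0..n-1), and edges v is the set of
vertices that v has an edge to.\<close>

text \<open>round(w,j) = 2(w-1)+j, waves numbered from 1.\<close>
definition wround :: "nat \<Rightarrow> nat \<Rightarrow> nat" where
  "wround w j = 2 * (w - 1) + j"

definition layer :: "('v \<Rightarrow> nat) \<Rightarrow> 'v set \<Rightarrow> nat \<Rightarrow> 'v set" where
  "layer rnd D r = {v \<in> D. rnd v = r}"

definition commit_rule ::
  "('v \<Rightarrow> nat) \<Rightarrow> ('v \<Rightarrow> 'v set) \<Rightarrow> nat \<Rightarrow> 'v set \<Rightarrow> nat \<Rightarrow> 'v \<Rightarrow> bool" where
  "commit_rule rnd edges f D w v \<longleftrightarrow>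
     f + 1 \<le> card {u \<in> layer rnd D (wround w 2). v \<in> edges u}"

end

theory Submission
  imports Defs
begin

lemma arith_key:
  fixes f k s c r :: nat
  assumes "f \<ge> 1" "k \<ge> 3" "s \<ge> (k-1)*f+1" "r \<le> k*f+1" "c \<le> r" "c \<le> (k-2)*f"
    and "s*((k-1)*f+1) \<le> c*s + (r-c)*f"
  shows False
proof -
  obtain a where ka: "k = a + 3" using assms(2) by (metis add.commute le_add_diff_inverse)
  have s2: "s \<ge> 2*f+1" using assms(3) ka by (simp add: algebra_simps)
  have h1: "(r-c)*f \<le> (k*f+1-c)*f" using assms(4) by (intro mult_right_mono) auto
  have ck: "c \<le> k*f+1" using assms(4,5) by linarith
  have e0: "int (k*f+1-c) = int k * int f + 1 - int c" using ck by (simp add: of_nat_diff)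
  have e: "int (c*s + (k*f+1-c)*f) = int c * (int s - int f) + (int k * int f + 1) * int f"
    unfolding of_nat_add of_nat_mult e0 by (simp add: algebra_simps)
  have h2: "int c * (int s - int f) \<le> int ((a+1)*f) * (int s - int f)"
  proof (rule mult_right_mono)
    have "c \<le> (a+1)*f" using assms(6) ka by simp
    thus "int c \<le> int ((a+1)*f)" by linarith
    show "0 \<le> int s - int f" using s2 by linarith
  qed
  have h3: "int s * (int f + 1) > int f * (2*int f+1)"
  proof -
    have "int s * (int f + 1) \<ge> (2*int f + 1) * (int f + 1)" using s2 by (intro mult_right_mono) auto
    thus ?thesis by (simp add: algebra_simps)
  qed
  have "int (s*((k-1)*f+1)) \<le> int (c*s + (k*f+1-c)*f)" using assms(7) h1 by linarith
  hence "int s * (int (a+2) * int f + 1) \<le> int ((a+1)*f) * (int s - int f) + (int (a+3) * int f + 1) * int f"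
    using e h2 ka by (simp add: algebra_simps)
  thus False using h3 by (simp add: algebra_simps)
qed


theorem lemma4:
  fixes f k n :: nat
    and V :: "'v set"
    and rnd src :: "'v \<Rightarrow> nat"
    and edges :: "'v \<Rightarrow> 'v set"
    and DAG :: "nat \<Rightarrow> 'v set"
    and i w :: nat
  assumes hf: "f \<ge> 1"
    and hk: "k \<ge> 3"
    and hn: "n = k * f + 1"
    and vert: "\<forall>v\<in>V. rnd v \<ge> 1 \<and> src v < n"
    and no_equiv: "\<forall>u\<in>V. \<forall>v\<in>V. rnd u = rnd v \<and> src u = src v \<longrightarrow> u = v"
    and edges_in: "\<forall>v\<in>V. edges v \<subseteq> V"
    and strong_edges: "\<forall>v\<in>V. rnd v \<ge> 2 \<longrightarrow>
        card {u \<in> edges v. rnd u = rnd v - 1} = (k - 1) * f + 1 \<and>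
        inj_on src {u \<in> edges v. rnd u = rnd v - 1}"
    and local_dags: "\<forall>j<n. DAG j \<subseteq> V \<and> (\<forall>v\<in>DAG j. edges v \<subseteq> DAG j)"
    and hi: "i < n"
    and hw: "w \<ge> 1"
    and big: "card (layer rnd (DAG i) (wround w 2)) \<ge> (k - 1) * f + 1"
  shows "card {v \<in> layer rnd (DAG i) (wround w 1). commit_rule rnd edges f (DAG i) w v}
           \<ge> (k - 2) * f + 1"
  proof (rule ccontr)
  define r1 where "r1 = wround w 1"
  define r2 where "r2 = wround w 2"
  define R1 where "R1 = layer rnd (DAG i) r1"
  define R2 where "R2 = layer rnd (DAG i) r2"
  define m where "m = (k - 1) * f + 1"
  define d where "d = (\<lambda>v. card {u \<in> R2. v \<in> edges u})"
  define C where "C = {v \<in> R1. commit_rule rnd edges f (DAG i) w v}"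
  assume "\<not> ?thesis"
  hence cC: "card C \<le> (k-2)*f" unfolding C_def R1_def r1_def by simp
  have Di: "DAG i \<subseteq> V" "\<forall>v\<in>DAG i. edges v \<subseteq> DAG i" using local_dags hi by auto
  have r12: "r2 = r1 + 1" "r2 \<ge> 2" unfolding r1_def r2_def wround_def by auto
  have fin_layer: "finite (layer rnd (DAG i) r)" "card (layer rnd (DAG i) r) \<le> k*f+1" for r
  proof -
    have inj: "inj_on src (layer rnd (DAG i) r)" using no_equiv Di unfolding layer_def inj_on_def by blast
    have sub: "src ` layer rnd (DAG i) r \<subseteq> {..<n}" using vert Di unfolding layer_def by auto
    have "finite (src ` layer rnd (DAG i) r)" using sub finite_subset by blast
    thus "finite (layer rnd (DAG i) r)" using inj finite_image_iff by blast
    have "card (src ` layer rnd (DAG i) r) \<le> n" using sub by (metis card_lessThan card_mono finite_lessThan)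
    thus "card (layer rnd (DAG i) r) \<le> k*f+1" using inj card_image hn by metis
  qed
  have f1: "finite R1" "card R1 \<le> k*f+1" and f2: "finite R2" using fin_layer R1_def R2_def by auto
  have s: "card R2 \<ge> m" using big unfolding R2_def r2_def m_def .
  have out: "card {v \<in> R1. v \<in> edges u} = m" if u: "u \<in> R2" for u
  proof -
    have uV: "u \<in> V" "rnd u = r2" "u \<in> DAG i" using u Di unfolding R2_def layer_def by auto
    have "{v \<in> R1. v \<in> edges u} = {x \<in> edges u. rnd x = rnd u - 1}"
      using uV Di r12 unfolding R1_def layer_def by auto
    moreover have "card {x \<in> edges u. rnd x = rnd u - 1} = m" using strong_edges uV r12 m_def by auto
    ultimately show ?thesis by simp
  qed
  have "(\<Sum>u\<in>R2. card {v \<in> R1. v \<in> edges u}) = (\<Sum>u\<in>R2. \<Sum>v\<in>R1. if v \<in> edges u then 1 else 0)"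
    using f1 by (simp add: sum.inter_filter[symmetric])
  also have "\<dots> = (\<Sum>v\<in>R1. \<Sum>u\<in>R2. if v \<in> edges u then 1 else 0)" by (rule sum.swap)
  also have "\<dots> = (\<Sum>v\<in>R1. d v)" unfolding d_def using f2 by (simp add: sum.inter_filter[symmetric])
  finally have dc: "card R2 * m = (\<Sum>v\<in>R1. d v)" using out by simp
  have CR: "C \<subseteq> R1" unfolding C_def by auto
  have "(\<Sum>v\<in>R1. d v) = (\<Sum>v\<in>C. d v) + (\<Sum>v\<in>R1 - C. d v)"
    using f1 CR by (metis add.commute sum.subset_diff)
  also have "(\<Sum>v\<in>C. d v) \<le> (\<Sum>v\<in>C. card R2)"
    apply (rule sum_mono) unfolding d_def using f2 by (intro card_mono) auto
  also have "(\<Sum>v\<in>R1 - C. d v) \<le> (\<Sum>v\<in>R1 - C. f)"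
    apply (rule sum_mono) unfolding d_def C_def commit_rule_def R2_def r2_def by auto
  finally have "card R2 * m \<le> card C * card R2 + (card R1 - card C) * f"
    using dc f1 CR by (simp add: card_Diff_subset finite_subset)
  moreover have "card C \<le> card R1" using CR f1 card_mono by blast
  ultimately show False using arith_key[OF hf hk _ f1(2) _ cC, of "card R2"] s m_def
    by (metis mult.commute)
qed

end
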